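(* Let $A,B$ be rings with local units and $f:A\to B$ a ring homomorphism. The following are equivalent: (1) $f$ is non-degenerate; (2) $f$ extends to a strictly continuous unital ring homomorphism $\varphi:M(A)\to M(B)$ (i.e. $\varphi\circ\mu_A=\mu_B\circ f$). Furthermore, in this case there exists a unique ring homomorphism $M(A)\to M(B)$ extending $f$.
   Context: Rings are associative, not necessarily unital. A ring $A$ has local units if for every $a\in A$ there exist $e,e'\in A$ with $ae=e'a=a$. The multiplier ring $M(A)$ of such $A$ consists of pairs $m=(L,R)$ of additive maps $A\to A$, written $L(a)=ma$, $R(a)=am$, satisfying $m(ab)=(ma)b$, $(ab)m=a(bm)$ and $a(mb)=(am)b$ for all $a,b\in A$; addition is pointwise and multiplication is composition of these actions, making $M(A)$ a unital ring. The map $\mu_A:A\to M(A)$ sending $\xi$ to left and right multiplication by $\xi$ is an injective ring homomorphism identifying $A$ with an ideal of $M(A)$. The strict topology on $M(A)$ is the weakest topology making the maps $m\mapsto ma$ and $m\mapsto am$ continuous for each $a\in A$, where $A$ carries the discrete topology. For subrings $X,Y$ of a ring, $XY$ denotes the additive subgroup generated by products $xy$. A ring homomorphism $f:A\to B$ between rings with local units is non-degenerate if $f(A)B=Bf(A)=B$. *)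

theory Defs
  imports "HOL-Analysis.Analysis"
begin

definition has_local_units :: "'a::ring itself \<Rightarrow> bool" where
  "has_local_units _ \<longleftrightarrow> (\<forall>a::'a. \<exists>e e'. a * e = a \<and> e' * a = a)"

definition is_ring_hom :: "('a::ring \<Rightarrow> 'b::ring) \<Rightarrow> bool" where
  "is_ring_hom f \<longleftrightarrow> (\<forall>x y. f (x + y) = f x + f y \<and> f (x * y) = f x * f y)"

definition add_subgroup_gen :: "'a::ab_group_add set \<Rightarrow> 'a set" where
  "add_subgroup_gen S = \<Inter>{H. 0 \<in> H \<and> (\<forall>x\<in>H. \<forall>y\<in>H. x - y \<in> H) \<and> S \<subseteq> H}"

definition non_degenerate :: "('a::ring \<Rightarrow> 'b::ring) \<Rightarrow> bool" where
  "non_degenerate f \<longleftrightarrow>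
     add_subgroup_gen {f a * b | a b. True} = UNIV \<and>
     add_subgroup_gen {b * f a | a b. True} = UNIV"

text \<open>Multipliers: pairs (L,R) with L a = m a, R a = a m.\<close>
type_synonym 'a mult = "('a \<Rightarrow> 'a) \<times> ('a \<Rightarrow> 'a)"

definition multipliers :: "'a::ring itself \<Rightarrow> 'a mult set" where
  "multipliers _ = {(L, R). (\<forall>a b. L (a + b) = L a + L b) \<and> (\<forall>a b. R (a + b) = R a + R b)
      \<and> (\<forall>a b::'a. L (a * b) = L a * b) \<and> (\<forall>a b::'a. R (a * b) = a * R b)
      \<and> (\<forall>a b::'a. a * L b = R a * b)}"

definition mult_add :: "'a::ring mult \<Rightarrow> 'a mult \<Rightarrow> 'a mult" where
  "mult_add m n = ((\<lambda>a. fst m a + fst n a), (\<lambda>a. snd m a + snd n a))"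

text \<open>(mn)a = m(na), a(mn) = (am)n\<close>
definition mult_mul :: "'a::ring mult \<Rightarrow> 'a mult \<Rightarrow> 'a mult" where
  "mult_mul m n = (fst m \<circ> fst n, snd n \<circ> snd m)"

definition mult_one :: "'a::ring mult" where
  "mult_one = (id, id)"

definition mu :: "'a::ring \<Rightarrow> 'a mult" where
  "mu \<xi> = ((\<lambda>a. \<xi> * a), (\<lambda>a. a * \<xi>))"

text \<open>Strict topology: weakest topology on M(A) making m \<mapsto> ma, m \<mapsto> am continuous
  into discrete A (generated by the subbase of preimages of points).\<close>
definition strict_topology :: "'a::ring itself \<Rightarrow> 'a mult topology" where
  "strict_topology T = topology_generated_by
     ({{m \<in> multipliers T. fst m a = c} | a c. True} \<union>
      {{m \<in> multipliers T. snd m a = c} | a c. True})"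

definition mult_ring_hom :: "'a::ring itself \<Rightarrow> 'b::ring itself \<Rightarrow> ('a mult \<Rightarrow> 'b mult) \<Rightarrow> bool" where
  "mult_ring_hom TA TB \<phi> \<longleftrightarrow>
     (\<forall>m\<in>multipliers TA. \<phi> m \<in> multipliers TB) \<and>
     (\<forall>m\<in>multipliers TA. \<forall>n\<in>multipliers TA.
        \<phi> (mult_add m n) = mult_add (\<phi> m) (\<phi> n) \<and> \<phi> (mult_mul m n) = mult_mul (\<phi> m) (\<phi> n))"

definition extends_hom :: "('a::ring \<Rightarrow> 'b::ring) \<Rightarrow> ('a mult \<Rightarrow> 'b mult) \<Rightarrow> bool" where
  "extends_hom f \<phi> \<longleftrightarrow> (\<forall>\<xi>. \<phi> (mu \<xi>) = mu (f \<xi>))"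

end

theory Submission
  imports Defs
begin

lemma asg_induct:
  assumes "x \<in> add_subgroup_gen S" "P 0" "\<And>x y. P x \<Longrightarrow> P y \<Longrightarrow> P (x - y)" "\<And>s. s \<in> S \<Longrightarrow> P s"
  shows "P x"
proof -
  have "{x. P x} \<in> {H. 0 \<in> H \<and> (\<forall>x\<in>H. \<forall>y\<in>H. x - y \<in> H) \<and> S \<subseteq> H}"
    unfolding mem_Collect_eq subset_eq using assms(2-4) by simp
  with assms(1) have "x \<in> {x. P x}" unfolding add_subgroup_gen_def by (rule InterD)
  then show ?thesis by simp
qed

lemma asg_sub: "S \<subseteq> add_subgroup_gen S"
  unfolding add_subgroup_gen_def by (rule Inter_greatest) simp

lemma hom_add: "is_ring_hom f \<Longrightarrow> f (x + y) = f x + f y"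
  unfolding is_ring_hom_def by blast
lemma hom_mult: "is_ring_hom f \<Longrightarrow> f (x * y) = f x * f y"
  unfolding is_ring_hom_def by blast
lemma hom_zero: "is_ring_hom f \<Longrightarrow> f 0 = 0"
  using hom_add[of f 0 0] by simp
lemma hom_diff: "is_ring_hom f \<Longrightarrow> f (x - y) = f x - f y"
  using hom_add[of f "x - y" y] by (simp add: algebra_simps)

lemma additive_diff:
  assumes "\<forall>a b::'a::ab_group_add. L (a + b) = L a + (L b :: 'b::ab_group_add)"
  shows "L (x - y) = L x - L y"
proof -
  have "L (x - y) + L y = L x" using assms[rule_format, of "x - y" y] by simp
  then show ?thesis by (simp add: eq_diff_eq)
qed

lemma multI:
  assumes "m \<in> multipliers TYPE('a::ring)"
  shows mL_add: "fst m (a + b) = fst m a + fst m b"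
    and mR_add: "snd m (a + b) = snd m a + snd m b"
    and mL_mult: "fst m (a * b) = fst m a * b"
    and mR_mult: "snd m (a * b) = a * snd m b"
    and m_mid: "a * fst m b = snd m a * b"
  using assms by (cases m; auto simp: multipliers_def)+

lemma mu_mult: "mu (\<xi>::'a::ring) \<in> multipliers TYPE('a)"
  unfolding mu_def multipliers_def by (simp add: distrib_left distrib_right mult.assoc)

lemma mult_one_mult: "mult_one \<in> multipliers TYPE('a::ring)"
  unfolding mult_one_def multipliers_def by auto

lemma mul_mu_right:
  assumes "m \<in> multipliers TYPE('a::ring)"
  shows "mult_mul m (mu a) = mu (fst m a)"
  using multI[OF assms] unfolding mult_mul_def mu_def
  by (simp add: fun_eq_iff mult.assoc)

lemma mul_mu_left:
  assumes "m \<in> multipliers TYPE('a::ring)"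
  shows "mult_mul (mu a) m = mu (snd m a)"
  using multI[OF assms] unfolding mult_mul_def mu_def
  by (simp add: fun_eq_iff mult.assoc)

lemma lu_get:
  assumes "has_local_units TYPE('a::ring)"
  obtains e e' where "(z::'a) * e = z" "e' * z = z"
proof -
  from assms have "\<exists>e e'. z * e = z \<and> e' * z = z" unfolding has_local_units_def by (rule spec)
  then obtain e e' where "z * e = z \<and> e' * z = z" by (elim exE)
  then have "z * e = z" "e' * z = z" by simp_all
  then show ?thesis by (rule that)
qed

lemma lu_left:
  assumes "has_local_units TYPE('a::ring)" "\<And>c::'a. c * z = 0" shows "z = 0"
proof -
  obtain e e' where "z * e = z" "e' * z = z" using lu_get[OF assms(1)] .
  then show ?thesis using assms(2)[of e'] by simp
qed
lemma lu_right:
  assumes "has_local_units TYPE('a::ring)" "\<And>c::'a. z * c = 0" shows "z = 0"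
proof -
  obtain e e' where "z * e = z" "e' * z = z" using lu_get[OF assms(1)] .
  then show ?thesis using assms(2)[of e] by simp
qed

lemma r1: fixes a u e x :: "'a::ring"
  assumes "a * u = a" shows "a * (u + e - u * e) = a"
proof -
  have "a * (u * e) = a * e" using assms by (simp add: mult.assoc[symmetric])
  then show ?thesis using assms by (simp add: ring_distribs)
qed
lemma r2: fixes u e x :: "'a::ring"
  assumes "(x - x * u) * e = x - x * u" shows "x * (u + e - u * e) = x"
proof -
  have "x * e - x * (u * e) = x - x * u" using assms by (simp add: ring_distribs mult.assoc)
  then show ?thesis by (simp add: ring_distribs algebra_simps)
qed
lemma l1: fixes a u e x :: "'a::ring"
  assumes "u * a = a" shows "(u + e - e * u) * a = a"
proof -
  have "(e * u) * a = e * a" using assms by (simp add: mult.assoc)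
  then show ?thesis using assms by (simp add: ring_distribs)
qed
lemma l2: fixes u e x :: "'a::ring"
  assumes "e * (x - u * x) = x - u * x" shows "(u + e - e * u) * x = x"
proof -
  have "e * x - (e * u) * x = x - u * x" using assms by (simp add: ring_distribs mult.assoc)
  then show ?thesis by (simp add: ring_distribs algebra_simps)
qed
lemma t1: fixes a u v :: "'a::ring"
  assumes "u * a = a" shows "(u + v - v * u) * a = a"
  using l1[OF assms] .
lemma t2: fixes a u v :: "'a::ring"
  assumes "a * v = a" shows "a * (u + v - v * u) = a"
proof -
  have "a * (v * u) = a * u" using assms by (simp add: mult.assoc[symmetric])
  then show ?thesis using assms by (simp add: ring_distribs)
qed

lemma finite_left_unit:
  assumes "has_local_units TYPE('a::ring)" "finite (S::'a set)"
  shows "\<exists>u. \<forall>a\<in>S. u * a = a"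
  using assms(2)
proof (induction S rule: finite_induct)
  case empty then show ?case by simp
next
  case (insert x S)
  then obtain u where u: "\<forall>a\<in>S. u * a = a" by (elim exE)
  obtain e e' where e: "e' * (x - u * x) = x - u * x"
    using lu_get[OF assms(1), of "x - u * x"] by blast
  have "\<forall>a\<in>insert x S. (u + e' - e' * u) * a = a"
  proof
    fix a assume "a \<in> insert x S"
    then show "(u + e' - e' * u) * a = a"
    proof
      assume "a = x" then show ?thesis using l2[OF e] by simp
    next
      assume "a \<in> S" then show ?thesis using l1[of u a] u by simp
    qed
  qed
  then show ?case by (rule exI)
qed

lemma finite_right_unit:
  assumes "has_local_units TYPE('a::ring)" "finite (S::'a set)"
  shows "\<exists>u. \<forall>a\<in>S. a * u = a"
  using assms(2)
proof (induction S rule: finite_induct)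
  case empty then show ?case by simp
next
  case (insert x S)
  then obtain u where u: "\<forall>a\<in>S. a * u = a" by (elim exE)
  obtain e e' where e: "(x - x * u) * e = x - x * u"
    using lu_get[OF assms(1), of "x - x * u"] by blast
  have "\<forall>a\<in>insert x S. a * (u + e - u * e) = a"
  proof
    fix a assume "a \<in> insert x S"
    then show "a * (u + e - u * e) = a"
    proof
      assume "a = x" then show ?thesis using r2[OF e] by simp
    next
      assume "a \<in> S" then show ?thesis using r1[of a u] u by simp
    qed
  qed
  then show ?case by (rule exI)
qed

lemma finite_two_unit:
  assumes "has_local_units TYPE('a::ring)" "finite (S::'a set)" "finite (T::'a set)"
  shows "\<exists>w. (\<forall>a\<in>S. w * a = a) \<and> (\<forall>a\<in>T. a * w = a)"
proof -
  from finite_left_unit[OF assms(1,2)] obtain u where u: "\<forall>a\<in>S. u * a = a" ..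
  from finite_right_unit[OF assms(1,3)] obtain v where v: "\<forall>a\<in>T. a * v = a" ..
  have "(\<forall>a\<in>S. (u + v - v * u) * a = a) \<and> (\<forall>a\<in>T. a * (u + v - v * u) = a)"
    using u v t1[of u _ v] t2[of _ v u] by simp
  then show ?thesis by (rule exI)
qed

section \<open>Construction of the extension\<close>

locale ndctx =
  fixes f :: "'a::ring \<Rightarrow> 'b::ring"
  assumes luA: "has_local_units TYPE('a)" and luB: "has_local_units TYPE('b)"
    and hom: "is_ring_hom f" and nd: "non_degenerate f"
begin

lemma span_left:
  assumes "P 0" "\<And>x y. P x \<Longrightarrow> P y \<Longrightarrow> P (x - y)" "\<And>a c. P (f a * c)"
  shows "P b"
proof -
  have "b \<in> add_subgroup_gen {f a * b | a b. True}" using nd unfolding non_degenerate_def by auto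
  then show ?thesis
  proof (rule asg_induct)
    show "P 0" by (rule assms(1))
    show "P (x - y)" if "P x" "P y" for x y using assms(2) that by blast
    show "P s" if "s \<in> {f a * b | a b. True}" for s using that assms(3) by blast
  qed
qed

lemma span_right:
  assumes "P 0" "\<And>x y. P x \<Longrightarrow> P y \<Longrightarrow> P (x - y)" "\<And>a c. P (c * f a)"
  shows "P b"
proof -
  have "b \<in> add_subgroup_gen {b * f a | a b. True}" using nd unfolding non_degenerate_def by auto
  then show ?thesis
  proof (rule asg_induct)
    show "P 0" by (rule assms(1))
    show "P (x - y)" if "P x" "P y" for x y using assms(2) that by blast
    show "P s" if "s \<in> {b * f a | a b. True}" for s using that assms(3) by blast
  qed
qed

lemma uniqL:
  assumes "\<And>a. f a * z = 0" shows "z = 0"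
proof (rule lu_left[OF luB])
  fix c show "c * z = 0"
  proof (rule span_right[of "\<lambda>c. c * z = 0"])
    show "0 * z = 0" by simp
    show "(x - y) * z = 0" if "x * z = 0" "y * z = 0" for x y
      using that by (simp add: left_diff_distrib)
    show "c * f a * z = 0" for a c
      using assms[of a] by (simp add: mult.assoc)
  qed
qed

lemma uniqR:
  assumes "\<And>a. z * f a = 0" shows "z = 0"
proof (rule lu_right[OF luB])
  fix c show "z * c = 0"
  proof (rule span_left[of "\<lambda>c. z * c = 0"])
    show "z * 0 = 0" by simp
    show "z * (x - y) = 0" if "z * x = 0" "z * y = 0" for x y
      using that by (simp add: right_diff_distrib)
    show "z * (f a * c) = 0" for a c
      using assms[of a] by (simp add: mult.assoc[symmetric])
  qed
qed

definition PL :: "'a mult \<Rightarrow> 'b \<Rightarrow> 'b \<Rightarrow> bool" where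
  "PL m b x \<longleftrightarrow> (\<forall>a. f a * x = f (snd m a) * b)"
definition PR :: "'a mult \<Rightarrow> 'b \<Rightarrow> 'b \<Rightarrow> bool" where
  "PR m b x \<longleftrightarrow> (\<forall>a. x * f a = b * f (fst m a))"

definition "Lphi m b = (THE x. PL m b x)"
definition "Rphi m b = (THE x. PR m b x)"
definition "phi m = (Lphi m, Rphi m)"

lemma PL_uniq: "PL m b x \<Longrightarrow> PL m b y \<Longrightarrow> x = y"
  using uniqL[of "x - y"] unfolding PL_def by (simp add: right_diff_distrib)
lemma PR_uniq: "PR m b x \<Longrightarrow> PR m b y \<Longrightarrow> x = y"
  using uniqR[of "x - y"] unfolding PR_def by (simp add: left_diff_distrib)

lemma PL_ex:
  assumes "m \<in> multipliers TYPE('a)" shows "\<exists>x. PL m b x"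
proof (rule span_left[of "\<lambda>b. \<exists>x. PL m b x"])
  show "\<exists>x. PL m 0 x" by (rule exI[of _ 0]) (simp add: PL_def)
next
  fix x y assume "\<exists>u. PL m x u" "\<exists>u. PL m y u"
  then obtain u v where "PL m x u" "PL m y v" by blast
  then have "PL m (x - y) (u - v)" unfolding PL_def by (simp add: right_diff_distrib)
  then show "\<exists>u. PL m (x - y) u" by blast
next
  fix a c
  have "PL m (f a * c) (f (fst m a) * c)"
    unfolding PL_def
  proof
    fix a'
    have "f a' * f (fst m a) = f (snd m a') * f a"
      by (simp only: hom_mult[OF hom, symmetric] m_mid[OF assms])
    then show "f a' * (f (fst m a) * c) = f (snd m a') * (f a * c)"
      by (simp add: mult.assoc[symmetric])
  qed
  then show "\<exists>u. PL m (f a * c) u" by blast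
qed

lemma PR_ex:
  assumes "m \<in> multipliers TYPE('a)" shows "\<exists>x. PR m b x"
proof (rule span_right[of "\<lambda>b. \<exists>x. PR m b x"])
  show "\<exists>x. PR m 0 x" by (rule exI[of _ 0]) (simp add: PR_def)
next
  fix x y assume "\<exists>u. PR m x u" "\<exists>u. PR m y u"
  then obtain u v where "PR m x u" "PR m y v" by blast
  then have "PR m (x - y) (u - v)" unfolding PR_def by (simp add: left_diff_distrib)
  then show "\<exists>u. PR m (x - y) u" by blast
next
  fix a c
  have "PR m (c * f a) (c * f (snd m a))"
    unfolding PR_def
  proof
    fix a'
    have "f (snd m a) * f a' = f a * f (fst m a')"
      by (simp only: hom_mult[OF hom, symmetric] m_mid[OF assms])
    then show "c * f (snd m a) * f a' = c * f a * f (fst m a')"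
      by (simp add: mult.assoc)
  qed
  then show "\<exists>u. PR m (c * f a) u" by blast
qed

lemma Lphi_eq: "PL m b x \<Longrightarrow> Lphi m b = x"
  unfolding Lphi_def by (rule the_equality) (auto intro: PL_uniq)
lemma Rphi_eq: "PR m b x \<Longrightarrow> Rphi m b = x"
  unfolding Rphi_def by (rule the_equality) (auto intro: PR_uniq)

lemma Lphi_PL: "m \<in> multipliers TYPE('a) \<Longrightarrow> PL m b (Lphi m b)"
  using PL_ex[of m b] Lphi_eq[of m b] by auto
lemma Rphi_PR: "m \<in> multipliers TYPE('a) \<Longrightarrow> PR m b (Rphi m b)"
  using PR_ex[of m b] Rphi_eq[of m b] by auto


lemma gen_id: "m \<in> multipliers TYPE('a) \<Longrightarrow> f a' * f (fst m a) = f (snd m a') * f a"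
  by (simp only: hom_mult[OF hom, symmetric] m_mid)

lemma PL_gen: "m \<in> multipliers TYPE('a) \<Longrightarrow> PL m (f a * c) (f (fst m a) * c)"
  unfolding PL_def
proof
  fix a' assume m: "m \<in> multipliers TYPE('a)"
  show "f a' * (f (fst m a) * c) = f (snd m a') * (f a * c)"
    using gen_id[OF m, of a' a] by (simp add: mult.assoc[symmetric])
qed

lemma PR_gen: "m \<in> multipliers TYPE('a) \<Longrightarrow> PR m (c * f a) (c * f (snd m a))"
  unfolding PR_def
proof
  fix a' assume m: "m \<in> multipliers TYPE('a)"
  show "c * f (snd m a) * f a' = c * f a * f (fst m a')"
    using gen_id[OF m, of a a'] by (simp add: mult.assoc)
qed

lemma Lphi_gen: "m \<in> multipliers TYPE('a) \<Longrightarrow> Lphi m (f a * c) = f (fst m a) * c"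
  by (rule Lphi_eq[OF PL_gen])
lemma Rphi_gen: "m \<in> multipliers TYPE('a) \<Longrightarrow> Rphi m (c * f a) = c * f (snd m a)"
  by (rule Rphi_eq[OF PR_gen])

lemma Lphi_add: "m \<in> multipliers TYPE('a) \<Longrightarrow> Lphi m (x + y) = Lphi m x + Lphi m y"
  by (rule Lphi_eq) (use Lphi_PL[of m x] Lphi_PL[of m y] in \<open>simp add: PL_def distrib_left\<close>)
lemma Rphi_add: "m \<in> multipliers TYPE('a) \<Longrightarrow> Rphi m (x + y) = Rphi m x + Rphi m y"
  by (rule Rphi_eq) (use Rphi_PR[of m x] Rphi_PR[of m y] in \<open>simp add: PR_def distrib_right\<close>)
lemma Lphi_diff: "m \<in> multipliers TYPE('a) \<Longrightarrow> Lphi m (x - y) = Lphi m x - Lphi m y"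
  by (rule Lphi_eq) (use Lphi_PL[of m x] Lphi_PL[of m y] in \<open>simp add: PL_def right_diff_distrib\<close>)
lemma Rphi_diff: "m \<in> multipliers TYPE('a) \<Longrightarrow> Rphi m (x - y) = Rphi m x - Rphi m y"
  by (rule Rphi_eq) (use Rphi_PR[of m x] Rphi_PR[of m y] in \<open>simp add: PR_def left_diff_distrib\<close>)
lemma Lphi_zero: "Lphi m 0 = 0"
  by (rule Lphi_eq) (simp add: PL_def)
lemma Rphi_zero: "Rphi m 0 = 0"
  by (rule Rphi_eq) (simp add: PR_def)
lemma Lphi_mult: "m \<in> multipliers TYPE('a) \<Longrightarrow> Lphi m (x * y) = Lphi m x * y"
  by (rule Lphi_eq) (use Lphi_PL[of m x] in \<open>simp add: PL_def mult.assoc[symmetric]\<close>)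
lemma Rphi_mult: "m \<in> multipliers TYPE('a) \<Longrightarrow> Rphi m (x * y) = x * Rphi m y"
  by (rule Rphi_eq) (use Rphi_PR[of m y] in \<open>simp add: PR_def mult.assoc\<close>)

lemma phi_mid:
  assumes m: "m \<in> multipliers TYPE('a)"
  shows "b * Lphi m c = Rphi m b * c"
proof -
have "\<forall>b. b * Lphi m c = Rphi m b * c"
proof (rule span_left[of "\<lambda>c. \<forall>b. b * Lphi m c = Rphi m b * c"])
  show "\<forall>b. b * Lphi m 0 = Rphi m b * 0" by (simp add: Lphi_zero)
next
  fix x y assume "\<forall>b. b * Lphi m x = Rphi m b * x" "\<forall>b. b * Lphi m y = Rphi m b * y"
  then show "\<forall>b. b * Lphi m (x - y) = Rphi m b * (x - y)"
    by (simp add: Lphi_diff[OF m] right_diff_distrib)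
next
  fix a d
  show "\<forall>b. b * Lphi m (f a * d) = Rphi m b * (f a * d)"
  proof
    fix b
    show "b * Lphi m (f a * d) = Rphi m b * (f a * d)"
    proof (rule span_right[of "\<lambda>b. b * Lphi m (f a * d) = Rphi m b * (f a * d)"])
      show "0 * Lphi m (f a * d) = Rphi m 0 * (f a * d)" by (simp add: Rphi_zero)
    next
      fix x y assume "x * Lphi m (f a * d) = Rphi m x * (f a * d)" "y * Lphi m (f a * d) = Rphi m y * (f a * d)"
      then show "(x - y) * Lphi m (f a * d) = Rphi m (x - y) * (f a * d)"
        by (simp add: Rphi_diff[OF m] left_diff_distrib)
    next
      fix a' e
      have "e * f a' * (f (fst m a) * d) = e * (f a' * f (fst m a)) * d" by (simp add: mult.assoc)
      also have "\<dots> = e * (f (snd m a') * f a) * d" by (simp only: gen_id[OF m])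
      also have "\<dots> = e * f (snd m a') * (f a * d)" by (simp add: mult.assoc)
      finally show "e * f a' * Lphi m (f a * d) = Rphi m (e * f a') * (f a * d)"
        by (simp add: Lphi_gen[OF m] Rphi_gen[OF m])
    qed
  qed
qed
then show ?thesis by simp
qed

lemma phi_in:
  assumes m: "m \<in> multipliers TYPE('a)" shows "phi m \<in> multipliers TYPE('b)"
proof -
  have "\<forall>a b. Lphi m (a + b) = Lphi m a + Lphi m b" "\<forall>a b. Rphi m (a + b) = Rphi m a + Rphi m b"
    "\<forall>a b. Lphi m (a * b) = Lphi m a * b" "\<forall>a b. Rphi m (a * b) = a * Rphi m b"
    "\<forall>a b. a * Lphi m b = Rphi m a * b"
    using Lphi_add[OF m] Rphi_add[OF m] Lphi_mult[OF m] Rphi_mult[OF m] phi_mid[OF m] by simp_all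
  then show ?thesis unfolding phi_def multipliers_def by simp
qed

lemma phi_add: "phi (mult_add m n) = mult_add (phi m) (phi n)" if "m \<in> multipliers TYPE('a)" "n \<in> multipliers TYPE('a)"
proof -
  have "Lphi (mult_add m n) b = Lphi m b + Lphi n b" for b
    by (rule Lphi_eq) (use Lphi_PL[OF that(1), of b] Lphi_PL[OF that(2), of b] in
        \<open>simp add: PL_def mult_add_def distrib_left distrib_right hom_add[OF hom]\<close>)
  moreover have "Rphi (mult_add m n) b = Rphi m b + Rphi n b" for b
    by (rule Rphi_eq) (use Rphi_PR[OF that(1), of b] Rphi_PR[OF that(2), of b] in
        \<open>simp add: PR_def mult_add_def distrib_left distrib_right hom_add[OF hom]\<close>)
  ultimately show ?thesis unfolding phi_def mult_add_def by (simp add: fun_eq_iff)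
qed

lemma phi_mul: "phi (mult_mul m n) = mult_mul (phi m) (phi n)" if "m \<in> multipliers TYPE('a)" "n \<in> multipliers TYPE('a)"
proof -
  have "Lphi (mult_mul m n) b = Lphi m (Lphi n b)" for b
    by (rule Lphi_eq) (use Lphi_PL[OF that(1), of "Lphi n b"] Lphi_PL[OF that(2), of b] in
        \<open>simp add: PL_def mult_mul_def\<close>)
  moreover have "Rphi (mult_mul m n) b = Rphi n (Rphi m b)" for b
    by (rule Rphi_eq) (use Rphi_PR[OF that(1), of b] Rphi_PR[OF that(2), of "Rphi m b"] in
        \<open>simp add: PR_def mult_mul_def\<close>)
  ultimately show ?thesis unfolding phi_def mult_mul_def by (simp add: fun_eq_iff)
qed

lemma phi_one: "phi mult_one = mult_one"
proof -
  have "Lphi mult_one b = b" for b by (rule Lphi_eq) (simp add: PL_def mult_one_def)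
  moreover have "Rphi mult_one b = b" for b by (rule Rphi_eq) (simp add: PR_def mult_one_def)
  ultimately show ?thesis unfolding phi_def mult_one_def by (simp add: fun_eq_iff)
qed

lemma phi_mu: "phi (mu \<xi>) = mu (f \<xi>)"
proof -
  have "Lphi (mu \<xi>) b = f \<xi> * b" for b
    by (rule Lphi_eq) (simp add: PL_def mu_def hom_mult[OF hom] mult.assoc)
  moreover have "Rphi (mu \<xi>) b = b * f \<xi>" for b
    by (rule Rphi_eq) (simp add: PR_def mu_def hom_mult[OF hom] mult.assoc)
  ultimately show ?thesis unfolding phi_def mu_def by (simp add: fun_eq_iff)
qed

lemma phi_hom: "mult_ring_hom TYPE('a) TYPE('b) phi"
  unfolding mult_ring_hom_def using phi_in phi_add phi_mul by simp

lemma phi_ext: "extends_hom f phi"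
  unfolding extends_hom_def using phi_mu by simp


lemma Ldep: "\<exists>S. finite S \<and> (\<forall>m\<in>multipliers TYPE('a). \<forall>n\<in>multipliers TYPE('a).
    (\<forall>a\<in>S. fst m a = fst n a) \<longrightarrow> Lphi m b = Lphi n b)"
proof (rule span_left[of "\<lambda>b. \<exists>S. finite S \<and> (\<forall>m\<in>multipliers TYPE('a). \<forall>n\<in>multipliers TYPE('a).
    (\<forall>a\<in>S. fst m a = fst n a) \<longrightarrow> Lphi m b = Lphi n b)"])
  show "\<exists>S. finite S \<and> (\<forall>m\<in>multipliers TYPE('a). \<forall>n\<in>multipliers TYPE('a).
    (\<forall>a\<in>S. fst m a = fst n a) \<longrightarrow> Lphi m 0 = Lphi n 0)"
    by (rule exI[of _ "{}"]) (simp add: Lphi_zero)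
next
  fix x y
  assume "\<exists>S. finite S \<and> (\<forall>m\<in>multipliers TYPE('a). \<forall>n\<in>multipliers TYPE('a).
    (\<forall>a\<in>S. fst m a = fst n a) \<longrightarrow> Lphi m x = Lphi n x)"
  then obtain S1 where S1: "finite S1" "\<forall>m\<in>multipliers TYPE('a). \<forall>n\<in>multipliers TYPE('a).
    (\<forall>a\<in>S1. fst m a = fst n a) \<longrightarrow> Lphi m x = Lphi n x" by (elim exE conjE)
  assume "\<exists>S. finite S \<and> (\<forall>m\<in>multipliers TYPE('a). \<forall>n\<in>multipliers TYPE('a).
    (\<forall>a\<in>S. fst m a = fst n a) \<longrightarrow> Lphi m y = Lphi n y)"
  then obtain S2 where S2: "finite S2" "\<forall>m\<in>multipliers TYPE('a). \<forall>n\<in>multipliers TYPE('a).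
    (\<forall>a\<in>S2. fst m a = fst n a) \<longrightarrow> Lphi m y = Lphi n y" by (elim exE conjE)
  have "finite (S1 \<union> S2) \<and> (\<forall>m\<in>multipliers TYPE('a). \<forall>n\<in>multipliers TYPE('a).
    (\<forall>a\<in>S1 \<union> S2. fst m a = fst n a) \<longrightarrow> Lphi m (x - y) = Lphi n (x - y))"
  proof (intro conjI ballI impI)
    show "finite (S1 \<union> S2)" using S1(1) S2(1) by simp
    fix m n assume m: "m \<in> multipliers TYPE('a)" and n: "n \<in> multipliers TYPE('a)"
      and h: "\<forall>a\<in>S1 \<union> S2. fst m a = fst n a"
    have 1: "Lphi m x = Lphi n x"
      by (rule S1(2)[rule_format, OF m n]) (use h in simp)
    have 2: "Lphi m y = Lphi n y"
      by (rule S2(2)[rule_format, OF m n]) (use h in simp)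
    show "Lphi m (x - y) = Lphi n (x - y)"
      by (simp only: Lphi_diff[OF m] Lphi_diff[OF n] 1 2)
  qed
  then show "\<exists>S. finite S \<and> (\<forall>m\<in>multipliers TYPE('a). \<forall>n\<in>multipliers TYPE('a).
    (\<forall>a\<in>S. fst m a = fst n a) \<longrightarrow> Lphi m (x - y) = Lphi n (x - y))" by (rule exI)
next
  fix a c
  show "\<exists>S. finite S \<and> (\<forall>m\<in>multipliers TYPE('a). \<forall>n\<in>multipliers TYPE('a).
    (\<forall>a\<in>S. fst m a = fst n a) \<longrightarrow> Lphi m (f a * c) = Lphi n (f a * c))"
    by (rule exI[of _ "{a}"]) (simp add: Lphi_gen)
qed

lemma Rdep: "\<exists>S. finite S \<and> (\<forall>m\<in>multipliers TYPE('a). \<forall>n\<in>multipliers TYPE('a).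
    (\<forall>a\<in>S. snd m a = snd n a) \<longrightarrow> Rphi m b = Rphi n b)"
proof (rule span_right[of "\<lambda>b. \<exists>S. finite S \<and> (\<forall>m\<in>multipliers TYPE('a). \<forall>n\<in>multipliers TYPE('a).
    (\<forall>a\<in>S. snd m a = snd n a) \<longrightarrow> Rphi m b = Rphi n b)"])
  show "\<exists>S. finite S \<and> (\<forall>m\<in>multipliers TYPE('a). \<forall>n\<in>multipliers TYPE('a).
    (\<forall>a\<in>S. snd m a = snd n a) \<longrightarrow> Rphi m 0 = Rphi n 0)"
    by (rule exI[of _ "{}"]) (simp add: Rphi_zero)
next
  fix x y
  assume "\<exists>S. finite S \<and> (\<forall>m\<in>multipliers TYPE('a). \<forall>n\<in>multipliers TYPE('a).
    (\<forall>a\<in>S. snd m a = snd n a) \<longrightarrow> Rphi m x = Rphi n x)"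
  then obtain S1 where S1: "finite S1" "\<forall>m\<in>multipliers TYPE('a). \<forall>n\<in>multipliers TYPE('a).
    (\<forall>a\<in>S1. snd m a = snd n a) \<longrightarrow> Rphi m x = Rphi n x" by (elim exE conjE)
  assume "\<exists>S. finite S \<and> (\<forall>m\<in>multipliers TYPE('a). \<forall>n\<in>multipliers TYPE('a).
    (\<forall>a\<in>S. snd m a = snd n a) \<longrightarrow> Rphi m y = Rphi n y)"
  then obtain S2 where S2: "finite S2" "\<forall>m\<in>multipliers TYPE('a). \<forall>n\<in>multipliers TYPE('a).
    (\<forall>a\<in>S2. snd m a = snd n a) \<longrightarrow> Rphi m y = Rphi n y" by (elim exE conjE)
  have "finite (S1 \<union> S2) \<and> (\<forall>m\<in>multipliers TYPE('a). \<forall>n\<in>multipliers TYPE('a).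
    (\<forall>a\<in>S1 \<union> S2. snd m a = snd n a) \<longrightarrow> Rphi m (x - y) = Rphi n (x - y))"
  proof (intro conjI ballI impI)
    show "finite (S1 \<union> S2)" using S1(1) S2(1) by simp
    fix m n assume m: "m \<in> multipliers TYPE('a)" and n: "n \<in> multipliers TYPE('a)"
      and h: "\<forall>a\<in>S1 \<union> S2. snd m a = snd n a"
    have 1: "Rphi m x = Rphi n x"
      by (rule S1(2)[rule_format, OF m n]) (use h in simp)
    have 2: "Rphi m y = Rphi n y"
      by (rule S2(2)[rule_format, OF m n]) (use h in simp)
    show "Rphi m (x - y) = Rphi n (x - y)"
      by (simp only: Rphi_diff[OF m] Rphi_diff[OF n] 1 2)
  qed
  then show "\<exists>S. finite S \<and> (\<forall>m\<in>multipliers TYPE('a). \<forall>n\<in>multipliers TYPE('a).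
    (\<forall>a\<in>S. snd m a = snd n a) \<longrightarrow> Rphi m (x - y) = Rphi n (x - y))" by (rule exI)
next
  fix a c
  show "\<exists>S. finite S \<and> (\<forall>m\<in>multipliers TYPE('a). \<forall>n\<in>multipliers TYPE('a).
    (\<forall>a\<in>S. snd m a = snd n a) \<longrightarrow> Rphi m (c * f a) = Rphi n (c * f a))"
    by (rule exI[of _ "{a}"]) (simp add: Rphi_gen)
qed


lemma uniq:
  assumes psi: "mult_ring_hom TYPE('a) TYPE('b) \<psi>" "extends_hom f \<psi>"
    and m: "m \<in> multipliers TYPE('a)"
  shows "\<psi> m = phi m"
proof -
  have pm: "\<psi> m \<in> multipliers TYPE('b)" using psi(1) m unfolding mult_ring_hom_def by blast
  have pmul: "\<psi> (mult_mul p q) = mult_mul (\<psi> p) (\<psi> q)"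
    if "p \<in> multipliers TYPE('a)" "q \<in> multipliers TYPE('a)" for p q
    using psi(1) that unfolding mult_ring_hom_def by blast
  have pmu: "\<psi> (mu \<xi>) = mu (f \<xi>)" for \<xi> using psi(2) unfolding extends_hom_def by blast
  have addL: "\<forall>a b. fst (\<psi> m) (a + b) = fst (\<psi> m) a + fst (\<psi> m) b" using mL_add[OF pm] by simp
  have addR: "\<forall>a b. snd (\<psi> m) (a + b) = snd (\<psi> m) a + snd (\<psi> m) b" using mR_add[OF pm] by simp
  have zL: "fst (\<psi> m) 0 = 0" using mL_add[OF pm, of 0 0] by simp
  have zR: "snd (\<psi> m) 0 = 0" using mR_add[OF pm, of 0 0] by simp
  have L: "fst (\<psi> m) b = Lphi m b" for b
  proof (rule span_left[of "\<lambda>b. fst (\<psi> m) b = Lphi m b"])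
    show "fst (\<psi> m) 0 = Lphi m 0" by (simp only: zL Lphi_zero)
  next
    fix x y assume "fst (\<psi> m) x = Lphi m x" "fst (\<psi> m) y = Lphi m y"
    then show "fst (\<psi> m) (x - y) = Lphi m (x - y)"
      by (simp only: additive_diff[OF addL] Lphi_diff[OF m])
  next
    fix a c
    have "fst (\<psi> m) (f a * c) = fst (mult_mul (\<psi> m) (\<psi> (mu a))) c"
      by (simp only: pmu) (simp add: mult_mul_def mu_def)
    also have "\<dots> = fst (\<psi> (mult_mul m (mu a))) c" by (simp only: pmul[OF m mu_mult])
    also have "\<dots> = f (fst m a) * c" by (simp only: mul_mu_right[OF m] pmu) (simp add: mu_def)
    finally show "fst (\<psi> m) (f a * c) = Lphi m (f a * c)" by (simp only: Lphi_gen[OF m])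
  qed
  have R: "snd (\<psi> m) b = Rphi m b" for b
  proof (rule span_right[of "\<lambda>b. snd (\<psi> m) b = Rphi m b"])
    show "snd (\<psi> m) 0 = Rphi m 0" by (simp only: zR Rphi_zero)
  next
    fix x y assume "snd (\<psi> m) x = Rphi m x" "snd (\<psi> m) y = Rphi m y"
    then show "snd (\<psi> m) (x - y) = Rphi m (x - y)"
      by (simp only: additive_diff[OF addR] Rphi_diff[OF m])
  next
    fix a c
    have "snd (\<psi> m) (c * f a) = snd (mult_mul (\<psi> (mu a)) (\<psi> m)) c"
      by (simp only: pmu) (simp add: mult_mul_def mu_def)
    also have "\<dots> = snd (\<psi> (mult_mul (mu a) m)) c" by (simp only: pmul[OF mu_mult m])
    also have "\<dots> = c * f (snd m a)" by (simp only: mul_mu_left[OF m] pmu) (simp add: mu_def)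
    finally show "snd (\<psi> m) (c * f a) = Rphi m (c * f a)" by (simp only: Rphi_gen[OF m])
  qed
  show ?thesis unfolding phi_def
    by (rule prod_eqI) (simp_all add: fun_eq_iff L R)
qed

end

section \<open>Strict topology facts\<close>

lemma strict_eq: "strict_topology TYPE('c::ring) = topology_generated_by
     ({{m \<in> multipliers TYPE('c). fst m a = c} | a c. True} \<union>
      {{m \<in> multipliers TYPE('c). snd m a = c} | a c. True})"
  by (simp add: strict_topology_def)

lemma strict_space: "topspace (strict_topology TYPE('c::ring)) = multipliers TYPE('c)"
proof -
  have "\<Union>({{m \<in> multipliers TYPE('c). fst m a = c} | a c. True} \<union>
      {{m \<in> multipliers TYPE('c). snd m a = c} | a c. True}) = multipliers TYPE('c)"
  proof (rule set_eqI)
    fix m :: "'c mult"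
    show "m \<in> \<Union>({{m \<in> multipliers TYPE('c). fst m a = c} | a c. True} \<union>
      {{m \<in> multipliers TYPE('c). snd m a = c} | a c. True}) \<longleftrightarrow> m \<in> multipliers TYPE('c)"
    proof
      assume "m \<in> multipliers TYPE('c)"
      then have "m \<in> {n \<in> multipliers TYPE('c). fst n 0 = fst m 0}" by simp
      moreover have "{n \<in> multipliers TYPE('c). fst n 0 = fst m 0} \<in>
        {{m \<in> multipliers TYPE('c). fst m a = c} | a c. True}" by blast
      ultimately show "m \<in> \<Union>({{m \<in> multipliers TYPE('c). fst m a = c} | a c. True} \<union>
      {{m \<in> multipliers TYPE('c). snd m a = c} | a c. True})" by blast
    qed blast
  qed
  then show ?thesis by (simp only: strict_eq topology_generated_by_topspace)
qed

lemma strict_basic_L: "openin (strict_topology TYPE('c::ring)) {m \<in> multipliers TYPE('c). fst m a = c}"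
  unfolding strict_eq by (rule topology_generated_by_Basis) blast
lemma strict_basic_R: "openin (strict_topology TYPE('c::ring)) {m \<in> multipliers TYPE('c). snd m a = c}"
  unfolding strict_eq by (rule topology_generated_by_Basis) blast


lemma strict_Union: "\<Union>({{m \<in> multipliers TYPE('c). fst m a = c} | a c. True} \<union>
      {{m \<in> multipliers TYPE('c). snd m a = c} | a c. True}) = multipliers TYPE('c::ring)"
  using strict_space[where 'c='c] by (simp only: strict_eq topology_generated_by_topspace)

lemma strict_cont:
  assumes g: "\<forall>m\<in>multipliers TYPE('a::ring). g m \<in> multipliers TYPE('b::ring)"
    and oL: "\<And>b c. openin (strict_topology TYPE('a)) {m \<in> multipliers TYPE('a). fst (g m) b = c}"
    and oR: "\<And>b c. openin (strict_topology TYPE('a)) {m \<in> multipliers TYPE('a). snd (g m) b = c}"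
  shows "continuous_map (strict_topology TYPE('a)) (strict_topology TYPE('b)) g"
  unfolding strict_eq[where 'c='b]
proof (rule continuous_on_generated_topo)
  fix U assume "U \<in> ({{m \<in> multipliers TYPE('b). fst m a = c} | a c. True} \<union>
      {{m \<in> multipliers TYPE('b). snd m a = c} | a c. True})"
  then obtain b c where "U = {n \<in> multipliers TYPE('b). fst n b = c} \<or> U = {n \<in> multipliers TYPE('b). snd n b = c}"
    by blast
  then show "openin (strict_topology TYPE('a)) (g -` U \<inter> topspace (strict_topology TYPE('a)))"
  proof
    assume U: "U = {n \<in> multipliers TYPE('b). fst n b = c}"
    have "g -` U \<inter> topspace (strict_topology TYPE('a)) = {m \<in> multipliers TYPE('a). fst (g m) b = c}"
      unfolding U strict_space using g by blast
    then show ?thesis using oL by simp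
  next
    assume U: "U = {n \<in> multipliers TYPE('b). snd n b = c}"
    have "g -` U \<inter> topspace (strict_topology TYPE('a)) = {m \<in> multipliers TYPE('a). snd (g m) b = c}"
      unfolding U strict_space using g by blast
    then show ?thesis using oR by simp
  qed
next
  show "g ` topspace (strict_topology TYPE('a)) \<subseteq> \<Union>({{m \<in> multipliers TYPE('b). fst m a = c} | a c. True} \<union>
      {{m \<in> multipliers TYPE('b). snd m a = c} | a c. True})"
    unfolding strict_Union[where 'c='b] strict_space using g by blast
qed

lemma fin_open_L:
  assumes "finite S"
  shows "openin (strict_topology TYPE('c::ring)) {m \<in> multipliers TYPE('c). \<forall>a\<in>S. fst m a = fst m0 a}"
  using assms
proof (induction S rule: finite_induct)
  case empty then show ?case using openin_topspace[of "strict_topology TYPE('c)"] by (simp add: strict_space)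
next
  case (insert x S)
  have "{m \<in> multipliers TYPE('c). \<forall>a\<in>insert x S. fst m a = fst m0 a} =
        {m \<in> multipliers TYPE('c). \<forall>a\<in>S. fst m a = fst m0 a} \<inter> {m \<in> multipliers TYPE('c). fst m x = fst m0 x}"
    by blast
  then show ?case using openin_Int[OF insert.IH strict_basic_L] by simp
qed

lemma fin_open_R:
  assumes "finite S"
  shows "openin (strict_topology TYPE('c::ring)) {m \<in> multipliers TYPE('c). \<forall>a\<in>S. snd m a = snd m0 a}"
  using assms
proof (induction S rule: finite_induct)
  case empty then show ?case using openin_topspace[of "strict_topology TYPE('c)"] by (simp add: strict_space)
next
  case (insert x S)
  have "{m \<in> multipliers TYPE('c). \<forall>a\<in>insert x S. snd m a = snd m0 a} =
        {m \<in> multipliers TYPE('c). \<forall>a\<in>S. snd m a = snd m0 a} \<inter> {m \<in> multipliers TYPE('c). snd m x = snd m0 x}"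
    by blast
  then show ?case using openin_Int[OF insert.IH strict_basic_R] by simp
qed

lemma strict_nbhd:
  assumes "openin (strict_topology TYPE('c::ring)) W" "m \<in> W"
  shows "\<exists>SL SR. finite SL \<and> finite SR \<and> (\<forall>n\<in>multipliers TYPE('c).
           (\<forall>a\<in>SL. fst n a = fst m a) \<longrightarrow> (\<forall>a\<in>SR. snd n a = snd m a) \<longrightarrow> n \<in> W)"
proof -
  have "generate_topology_on ({{m \<in> multipliers TYPE('c). fst m a = c} | a c. True} \<union>
      {{m \<in> multipliers TYPE('c). snd m a = c} | a c. True}) W"
    using assms(1) unfolding strict_eq by (rule openin_topology_generated_by)
  then show ?thesis using assms(2)
  proof (induction arbitrary: m)
    case Empty then show ?case by simp
  next
    case (Int A B)
    from Int.IH(1)[OF IntD1[OF Int.prems]] obtain SL1 SR1 where 1: "finite SL1" "finite SR1"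
      "\<forall>n\<in>multipliers TYPE('c). (\<forall>a\<in>SL1. fst n a = fst m a) \<longrightarrow> (\<forall>a\<in>SR1. snd n a = snd m a) \<longrightarrow> n \<in> A"
      by (elim exE conjE)
    from Int.IH(2)[OF IntD2[OF Int.prems]] obtain SL2 SR2 where 2: "finite SL2" "finite SR2"
      "\<forall>n\<in>multipliers TYPE('c). (\<forall>a\<in>SL2. fst n a = fst m a) \<longrightarrow> (\<forall>a\<in>SR2. snd n a = snd m a) \<longrightarrow> n \<in> B"
      by (elim exE conjE)
    have "finite (SL1 \<union> SL2) \<and> finite (SR1 \<union> SR2) \<and> (\<forall>n\<in>multipliers TYPE('c).
           (\<forall>a\<in>SL1 \<union> SL2. fst n a = fst m a) \<longrightarrow> (\<forall>a\<in>SR1 \<union> SR2. snd n a = snd m a) \<longrightarrow> n \<in> A \<inter> B)"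
    proof (intro conjI ballI impI)
      show "finite (SL1 \<union> SL2)" "finite (SR1 \<union> SR2)" using 1 2 by simp_all
      fix n assume n: "n \<in> multipliers TYPE('c)" and hL: "\<forall>a\<in>SL1 \<union> SL2. fst n a = fst m a"
        and hR: "\<forall>a\<in>SR1 \<union> SR2. snd n a = snd m a"
      have "n \<in> A" using 1(3)[rule_format, OF n] hL hR by simp
      moreover have "n \<in> B" using 2(3)[rule_format, OF n] hL hR by simp
      ultimately show "n \<in> A \<inter> B" by (rule IntI)
    qed
    then show ?case by blast
  next
    case (UN K)
    then obtain k where k: "k \<in> K" "m \<in> k" by blast
    from UN.IH[OF k] obtain SL SR where 1: "finite SL" "finite SR"
      "\<forall>n\<in>multipliers TYPE('c). (\<forall>a\<in>SL. fst n a = fst m a) \<longrightarrow> (\<forall>a\<in>SR. snd n a = snd m a) \<longrightarrow> n \<in> k"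
      by (elim exE conjE)
    have "\<forall>n\<in>multipliers TYPE('c). (\<forall>a\<in>SL. fst n a = fst m a) \<longrightarrow> (\<forall>a\<in>SR. snd n a = snd m a) \<longrightarrow> n \<in> \<Union>K"
      using 1(3) k(1) by blast
    then show ?case using 1(1,2) by blast
  next
    case (Basis s)
    then obtain a c where "s = {m \<in> multipliers TYPE('c). fst m a = c} \<or> s = {m \<in> multipliers TYPE('c). snd m a = c}"
      by blast
    then show ?case
    proof
      assume s: "s = {m \<in> multipliers TYPE('c). fst m a = c}"
      have "\<forall>n\<in>multipliers TYPE('c). (\<forall>a'\<in>{a}. fst n a' = fst m a') \<longrightarrow> (\<forall>a'\<in>{}. snd n a' = snd m a') \<longrightarrow> n \<in> s"
        using Basis.prems unfolding s by simp
      then show ?case by blast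
    next
      assume s: "s = {m \<in> multipliers TYPE('c). snd m a = c}"
      have "\<forall>n\<in>multipliers TYPE('c). (\<forall>a'\<in>{}. fst n a' = fst m a') \<longrightarrow> (\<forall>a'\<in>{a}. snd n a' = snd m a') \<longrightarrow> n \<in> s"
        using Basis.prems unfolding s by simp
      then show ?case by blast
    qed
  qed
qed


context ndctx
begin

lemma phi_cont: "continuous_map (strict_topology TYPE('a)) (strict_topology TYPE('b)) phi"
proof (rule strict_cont)
  show "\<forall>m\<in>multipliers TYPE('a). phi m \<in> multipliers TYPE('b)" using phi_in by blast
next
  fix b c
  show "openin (strict_topology TYPE('a)) {m \<in> multipliers TYPE('a). fst (phi m) b = c}"
  proof (subst openin_subopen, intro ballI)
    fix m0 assume m0: "m0 \<in> {m \<in> multipliers TYPE('a). fst (phi m) b = c}"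
    from Ldep[of b] obtain S where S: "finite S" "\<forall>m\<in>multipliers TYPE('a). \<forall>n\<in>multipliers TYPE('a).
      (\<forall>a\<in>S. fst m a = fst n a) \<longrightarrow> Lphi m b = Lphi n b" by (elim exE conjE)
    let ?T = "{m \<in> multipliers TYPE('a). \<forall>a\<in>S. fst m a = fst m0 a}"
    have "openin (strict_topology TYPE('a)) ?T" by (rule fin_open_L[OF S(1)])
    moreover have "m0 \<in> ?T" using m0 by simp
    moreover have "?T \<subseteq> {m \<in> multipliers TYPE('a). fst (phi m) b = c}"
    proof
      fix m assume m: "m \<in> ?T"
      have "Lphi m b = Lphi m0 b" using S(2)[rule_format, of m m0] m m0 by simp
      then show "m \<in> {m \<in> multipliers TYPE('a). fst (phi m) b = c}" using m m0 by (simp add: phi_def)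
    qed
    ultimately show "\<exists>T. openin (strict_topology TYPE('a)) T \<and> m0 \<in> T \<and> T \<subseteq> {m \<in> multipliers TYPE('a). fst (phi m) b = c}"
      by blast
  qed
next
  fix b c
  show "openin (strict_topology TYPE('a)) {m \<in> multipliers TYPE('a). snd (phi m) b = c}"
  proof (subst openin_subopen, intro ballI)
    fix m0 assume m0: "m0 \<in> {m \<in> multipliers TYPE('a). snd (phi m) b = c}"
    from Rdep[of b] obtain S where S: "finite S" "\<forall>m\<in>multipliers TYPE('a). \<forall>n\<in>multipliers TYPE('a).
      (\<forall>a\<in>S. snd m a = snd n a) \<longrightarrow> Rphi m b = Rphi n b" by (elim exE conjE)
    let ?T = "{m \<in> multipliers TYPE('a). \<forall>a\<in>S. snd m a = snd m0 a}"
    have "openin (strict_topology TYPE('a)) ?T" by (rule fin_open_R[OF S(1)])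
    moreover have "m0 \<in> ?T" using m0 by simp
    moreover have "?T \<subseteq> {m \<in> multipliers TYPE('a). snd (phi m) b = c}"
    proof
      fix m assume m: "m \<in> ?T"
      have "Rphi m b = Rphi m0 b" using S(2)[rule_format, of m m0] m m0 by simp
      then show "m \<in> {m \<in> multipliers TYPE('a). snd (phi m) b = c}" using m m0 by (simp add: phi_def)
    qed
    ultimately show "\<exists>T. openin (strict_topology TYPE('a)) T \<and> m0 \<in> T \<and> T \<subseteq> {m \<in> multipliers TYPE('a). snd (phi m) b = c}"
      by blast
  qed
qed

end

lemma fst_one: "fst mult_one x = x" by (simp add: mult_one_def)
lemma snd_one: "snd mult_one x = x" by (simp add: mult_one_def)

lemma nd_of_ext:
  fixes f :: "'a::ring \<Rightarrow> 'b::ring" and \<phi> :: "'a mult \<Rightarrow> 'b mult"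
  assumes luA: "has_local_units TYPE('a)"
    and one: "\<phi> mult_one = mult_one"
    and cont: "continuous_map (strict_topology TYPE('a)) (strict_topology TYPE('b)) \<phi>"
    and ext: "extends_hom f \<phi>"
  shows "non_degenerate f"
proof -
  have pmu: "\<phi> (mu \<xi>) = mu (f \<xi>)" for \<xi> using ext unfolding extends_hom_def by blast
  have getu: "\<exists>u. (\<forall>a\<in>SL. fst (mu u) a = fst mult_one a) \<and> (\<forall>a\<in>SR. snd (mu u) a = snd mult_one a)"
    if "finite SL" "finite SR" for SL SR :: "'a set"
  proof -
    from finite_two_unit[OF luA that] obtain w where w: "\<forall>a\<in>SL. w * a = a" "\<forall>a\<in>SR. a * w = a"
      by (elim exE conjE)
    have "(\<forall>a\<in>SL. fst (mu w) a = fst mult_one a) \<and> (\<forall>a\<in>SR. snd (mu w) a = snd mult_one a)"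
      using w by (simp add: mu_def mult_one_def)
    then show ?thesis by (rule exI)
  qed
  have "\<exists>u. f u * b = b" for b
  proof -
    let ?W = "{x \<in> topspace (strict_topology TYPE('a)). \<phi> x \<in> {n \<in> multipliers TYPE('b). fst n b = b}}"
    have W: "openin (strict_topology TYPE('a)) ?W"
      using cont strict_basic_L[where 'c='b, of b b] unfolding continuous_map_def by blast
    have one_in: "(mult_one :: 'a mult) \<in> ?W"
      using mult_one_mult[where 'a='a] mult_one_mult[where 'a='b]
      by (simp add: strict_space one fst_one snd_one)
    from strict_nbhd[OF W one_in] obtain SL SR where S: "finite SL" "finite SR"
      "\<forall>n\<in>multipliers TYPE('a). (\<forall>a\<in>SL. fst n a = fst mult_one a) \<longrightarrow>
          (\<forall>a\<in>SR. snd n a = snd mult_one a) \<longrightarrow> n \<in> ?W"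
      by (elim exE conjE)
    from getu[OF S(1,2)] obtain u where u: "\<forall>a\<in>SL. fst (mu u) a = fst mult_one a"
      "\<forall>a\<in>SR. snd (mu u) a = snd mult_one a" by (elim exE conjE)
    have "mu u \<in> ?W" using S(3)[rule_format, OF mu_mult] u by simp
    then have "fst (mu (f u)) b = b" by (simp add: pmu)
    then have "f u * b = b" by (simp add: mu_def)
    then show ?thesis by (rule exI)
  qed
  have "\<exists>u. b * f u = b" for b
  proof -
    let ?W = "{x \<in> topspace (strict_topology TYPE('a)). \<phi> x \<in> {n \<in> multipliers TYPE('b). snd n b = b}}"
    have W: "openin (strict_topology TYPE('a)) ?W"
      using cont strict_basic_R[where 'c='b, of b b] unfolding continuous_map_def by blast
    have one_in: "(mult_one :: 'a mult) \<in> ?W"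
      using mult_one_mult[where 'a='a] mult_one_mult[where 'a='b]
      by (simp add: strict_space one fst_one snd_one)
    from strict_nbhd[OF W one_in] obtain SL SR where S: "finite SL" "finite SR"
      "\<forall>n\<in>multipliers TYPE('a). (\<forall>a\<in>SL. fst n a = fst mult_one a) \<longrightarrow>
          (\<forall>a\<in>SR. snd n a = snd mult_one a) \<longrightarrow> n \<in> ?W"
      by (elim exE conjE)
    from getu[OF S(1,2)] obtain u where u: "\<forall>a\<in>SL. fst (mu u) a = fst mult_one a"
      "\<forall>a\<in>SR. snd (mu u) a = snd mult_one a" by (elim exE conjE)
    have "mu u \<in> ?W" using S(3)[rule_format, OF mu_mult] u by simp
    then have "snd (mu (f u)) b = b" by (simp add: pmu)
    then have "b * f u = b" by (simp add: mu_def)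
    then show ?thesis by (rule exI)
  qed
  have L: "b \<in> add_subgroup_gen {f a * b | a b. True}" for b
  proof -
    obtain u where "f u * b = b" using \<open>\<And>b. \<exists>u. f u * b = b\<close> by blast
    then have "b \<in> {f a * b | a b. True}" unfolding mem_Collect_eq
      by (intro exI[of _ u] exI[of _ b]) simp
    then show ?thesis by (rule subsetD[OF asg_sub])
  qed
  have R: "b \<in> add_subgroup_gen {b * f a | a b. True}" for b
  proof -
    obtain u where "b * f u = b" using \<open>\<And>b. \<exists>u. b * f u = b\<close> by blast
    then have "b \<in> {b * f a | a b. True}" unfolding mem_Collect_eq
      by (intro exI[of _ u] exI[of _ b]) simp
    then show ?thesis by (rule subsetD[OF asg_sub])
  qed
  show ?thesis unfolding non_degenerate_def
    by (intro conjI; rule sym, rule UNIV_eq_I) (rule L, rule R)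
qed

theorem mainTheorem11:
  fixes f :: "'a::ring \<Rightarrow> 'b::ring"
  assumes "has_local_units TYPE('a)" and "has_local_units TYPE('b)"
    and "is_ring_hom f"
  shows "(non_degenerate f \<longleftrightarrow>
           (\<exists>\<phi>. mult_ring_hom TYPE('a) TYPE('b) \<phi> \<and> \<phi> mult_one = mult_one \<and>
                continuous_map (strict_topology TYPE('a)) (strict_topology TYPE('b)) \<phi> \<and>
                extends_hom f \<phi>))
       \<and> (non_degenerate f \<longrightarrow>
           (\<exists>\<phi>. mult_ring_hom TYPE('a) TYPE('b) \<phi> \<and> extends_hom f \<phi> \<and>
              (\<forall>\<psi>. mult_ring_hom TYPE('a) TYPE('b) \<psi> \<and> extends_hom f \<psi> \<longrightarrow>
                  (\<forall>m\<in>multipliers TYPE('a). \<psi> m = \<phi> m))))"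
proof -
  have A: "(\<exists>\<phi>. mult_ring_hom TYPE('a) TYPE('b) \<phi> \<and> \<phi> mult_one = mult_one \<and>
                continuous_map (strict_topology TYPE('a)) (strict_topology TYPE('b)) \<phi> \<and>
                extends_hom f \<phi>) \<and>
           (\<exists>\<phi>. mult_ring_hom TYPE('a) TYPE('b) \<phi> \<and> extends_hom f \<phi> \<and>
              (\<forall>\<psi>. mult_ring_hom TYPE('a) TYPE('b) \<psi> \<and> extends_hom f \<psi> \<longrightarrow>
                  (\<forall>m\<in>multipliers TYPE('a). \<psi> m = \<phi> m)))"
    if nd: "non_degenerate f"
  proof -
    interpret ndctx f using assms nd by unfold_locales
    have u: "\<forall>\<psi>. mult_ring_hom TYPE('a) TYPE('b) \<psi> \<and> extends_hom f \<psi> \<longrightarrow>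
                  (\<forall>m\<in>multipliers TYPE('a). \<psi> m = phi m)"
      by (simp add: uniq)
    show ?thesis
    proof (intro conjI)
      show "\<exists>\<phi>. mult_ring_hom TYPE('a) TYPE('b) \<phi> \<and> \<phi> mult_one = mult_one \<and>
                continuous_map (strict_topology TYPE('a)) (strict_topology TYPE('b)) \<phi> \<and>
                extends_hom f \<phi>"
        by (rule exI[of _ phi]) (intro conjI phi_hom phi_one phi_cont phi_ext)
      show "\<exists>\<phi>. mult_ring_hom TYPE('a) TYPE('b) \<phi> \<and> extends_hom f \<phi> \<and>
              (\<forall>\<psi>. mult_ring_hom TYPE('a) TYPE('b) \<psi> \<and> extends_hom f \<psi> \<longrightarrow>
                  (\<forall>m\<in>multipliers TYPE('a). \<psi> m = \<phi> m))"
        by (rule exI[of _ phi]) (intro conjI phi_hom phi_ext u)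
    qed
  qed
  have B: "non_degenerate f" if "\<exists>\<phi>. mult_ring_hom TYPE('a) TYPE('b) \<phi> \<and> \<phi> mult_one = mult_one \<and>
                continuous_map (strict_topology TYPE('a)) (strict_topology TYPE('b)) \<phi> \<and>
                extends_hom f \<phi>"
  proof -
    from that obtain \<phi> where "\<phi> mult_one = mult_one"
      "continuous_map (strict_topology TYPE('a)) (strict_topology TYPE('b)) \<phi>" "extends_hom f \<phi>"
      by (elim exE conjE)
    then show ?thesis by (rule nd_of_ext[OF assms(1)])
  qed
  show ?thesis
  proof (intro conjI impI iffI)
    assume nd: "non_degenerate f"
    show "\<exists>\<phi>. mult_ring_hom TYPE('a) TYPE('b) \<phi> \<and> \<phi> mult_one = mult_one \<and>
                continuous_map (strict_topology TYPE('a)) (strict_topology TYPE('b)) \<phi> \<and>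
                extends_hom f \<phi>"
      using A[OF nd] by (rule conjunct1)
  next
    assume "\<exists>\<phi>. mult_ring_hom TYPE('a) TYPE('b) \<phi> \<and> \<phi> mult_one = mult_one \<and>
                continuous_map (strict_topology TYPE('a)) (strict_topology TYPE('b)) \<phi> \<and>
                extends_hom f \<phi>"
    then show "non_degenerate f" by (rule B)
  next
    assume nd: "non_degenerate f"
    show "\<exists>\<phi>. mult_ring_hom TYPE('a) TYPE('b) \<phi> \<and> extends_hom f \<phi> \<and>
              (\<forall>\<psi>. mult_ring_hom TYPE('a) TYPE('b) \<psi> \<and> extends_hom f \<psi> \<longrightarrow>
                  (\<forall>m\<in>multipliers TYPE('a). \<psi> m = \<phi> m))"
      using A[OF nd] by (rule conjunct2)
  qed
qed

end
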